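(* Let $a,b,c,d,e\in\mathbb C$ with $a\notin\mathbb Z$ and $e\notin\{0,-1,-2,\dots\}$. Then, as an identity of formal power series in $x,y$, $$F(a,b;e;x)\,F(c,d;1-a;y)=H_2(a,b,c,d;e;x,-y)+\sum_{k=1}^\infty\sum_{l=1}^k\frac{(k-1)!}{(l-1)!\,l!\,(k-l)!}\,\frac{(-1)^{k-l}(b)_l(c)_k(d)_k}{(1-a)_k(1-a)_{k-l}(e)_l}\,x^ly^k\,H_2(a-k+l,b+l,c+k,d+k;e+l;x,-y).$$
   Context: Pochhammer symbol: $(\lambda)_k=\Gamma(\lambda+k)/\Gamma(\lambda)$ for every integer $k$ (possibly negative) whenever defined; $(\lambda)_0=1$. Gauss function $F(a,b;c;x)=\sum_{k\ge0}\frac{(a)_k(b)_k}{(c)_k k!}x^k$. Horn's function $H_2(a,b,c,d;e;x,y)=\sum_{p,q\ge0}\frac{(a)_{p-q}(b)_p(c)_q(d)_q}{(e)_p\,p!\,q!}x^py^q$. All functions are regarded as formal power series in $x,y$; the infinite double sum converges in the formal (degree) topology. *)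

theory Defs
  imports "HOL-Analysis.Analysis"
begin

text \<open>Formal power series in two variables x, y over the complex numbers,
  represented by their coefficient function: f p q is the coefficient of x^p y^q.\<close>
type_synonym fps2 = "nat \<Rightarrow> nat \<Rightarrow> complex"

text \<open>Pochhammer symbol with an integer index:
  (lam)_k = Gamma(lam+k)/Gamma(lam); for k = -m < 0 this is 1/((lam-1)...(lam-m)).\<close>
definition poch_int :: "complex \<Rightarrow> int \<Rightarrow> complex" where
  "poch_int lam k = (if 0 \<le> k then pochhammer lam (nat k)
                     else inverse (pochhammer (lam + of_int k) (nat (- k))))"

definition fps2_mult :: "fps2 \<Rightarrow> fps2 \<Rightarrow> fps2" where
  "fps2_mult f g = (\<lambda>p q. \<Sum>i\<le>p. \<Sum>j\<le>q. f i j * g (p - i) (q - j))"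

definition fps2_add :: "fps2 \<Rightarrow> fps2 \<Rightarrow> fps2" where
  "fps2_add f g = (\<lambda>p q. f p q + g p q)"

definition fps2_smult :: "complex \<Rightarrow> fps2 \<Rightarrow> fps2" where
  "fps2_smult c f = (\<lambda>p q. c * f p q)"

definition fps2_monom :: "nat \<Rightarrow> nat \<Rightarrow> fps2" where
  "fps2_monom i j = (\<lambda>p q. if p = i \<and> q = j then 1 else 0)"

definition fps2_neg_y :: "fps2 \<Rightarrow> fps2" where
  "fps2_neg_y f = (\<lambda>p q. (-1) ^ q * f p q)"

definition in_x :: "(nat \<Rightarrow> complex) \<Rightarrow> fps2" where
  "in_x f = (\<lambda>p q. if q = 0 then f p else 0)"

definition in_y :: "(nat \<Rightarrow> complex) \<Rightarrow> fps2" where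
  "in_y f = (\<lambda>p q. if p = 0 then f q else 0)"

definition gaussF :: "complex \<Rightarrow> complex \<Rightarrow> complex \<Rightarrow> nat \<Rightarrow> complex" where
  "gaussF a b c = (\<lambda>k. pochhammer a k * pochhammer b k / (pochhammer c k * fact k))"

definition hornH2 :: "complex \<Rightarrow> complex \<Rightarrow> complex \<Rightarrow> complex \<Rightarrow> complex \<Rightarrow> fps2" where
  "hornH2 a b c d e = (\<lambda>p q. poch_int a (int p - int q) * pochhammer b p * pochhammer c q
      * pochhammer d q / (pochhammer e p * fact p * fact q))"

definition fps2_summable :: "('i \<Rightarrow> fps2) \<Rightarrow> 'i set \<Rightarrow> bool" where
  "fps2_summable F I = (\<forall>p q. (\<lambda>i. F i p q) summable_on I)"

definition fps2_sum :: "('i \<Rightarrow> fps2) \<Rightarrow> 'i set \<Rightarrow> fps2" where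
  "fps2_sum F I = (\<lambda>p q. \<Sum>\<^sub>\<infinity>i\<in>I. F i p q)"

end

theory Submission imports Defs begin


lemma notint_shift: "(a::complex) \<notin> \<int> \<Longrightarrow> a + of_int k \<notin> \<int>"
  by (metis Ints_diff Ints_of_int add_diff_cancel_right')

lemma notint_nonpos: "(a::complex) \<notin> \<int> \<Longrightarrow> a \<notin> \<int>\<^sub>\<le>\<^sub>0"
  using nonpos_Ints_subset_Ints by blast

lemma poch_int_Gamma:
  assumes "(a::complex) \<notin> \<int>"
  shows "poch_int a k = Gamma (a + of_int k) / Gamma a"
proof (cases "0 \<le> k")
  case True
  then show ?thesis using pochhammer_Gamma[OF notint_nonpos[OF assms], of "nat k"]
    by (simp add: poch_int_def)
next
  case False
  have n: "a + of_int k \<notin> \<int>\<^sub>\<le>\<^sub>0" using notint_nonpos[OF notint_shift[OF assms]] .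
  have "pochhammer (a + of_int k) (nat (-k)) = Gamma (a + of_int k + of_nat (nat (-k))) / Gamma (a + of_int k)"
    using pochhammer_Gamma[OF n] by blast
  also have "a + of_int k + of_nat (nat (-k)) = a" using False by simp
  finally show ?thesis using False by (simp add: poch_int_def)
qed

lemma Gamma_nz: "(a::complex) \<notin> \<int> \<Longrightarrow> Gamma a \<noteq> 0"
  using Gamma_nonzero notint_nonpos by blast



lemma poch_shift:
  assumes "(a::complex) \<notin> \<int>"
  shows "poch_int (a - of_nat m) (z + int m) = poch_int a z * ((-1)^m * pochhammer (1-a) m)"
proof -
  have am: "a - of_nat m \<notin> \<int>" using notint_shift[OF assms, of "- int m"] by simp
  have "(-1)^m * pochhammer (1-a) m = pochhammer (a - of_nat m) m"
    using pochhammer_minus[of "of_nat m - a" m] by simp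
  also have "\<dots> = Gamma a / Gamma (a - of_nat m)"
    using pochhammer_Gamma[OF notint_nonpos[OF am], of m] by simp
  finally have 1: "(-1)^m * pochhammer (1-a) m = Gamma a / Gamma (a - of_nat m)" .
  have 2: "a - of_nat m + of_int (z + int m) = a + of_int z" by simp
  show ?thesis unfolding 1 poch_int_Gamma[OF am] poch_int_Gamma[OF assms] 2
    using Gamma_nz[OF am] Gamma_nz[OF assms] by simp
qed

lemma poch_split:
  assumes "(a::complex) \<notin> \<int>"
  shows "pochhammer a p = poch_int a (int p - int q) * pochhammer (a + of_int (int p - int q)) q"
proof -
  have az: "a + of_int (int p - int q) \<notin> \<int>" using notint_shift[OF assms] by blast
  show ?thesis
    unfolding poch_int_Gamma[OF assms] pochhammer_Gamma[OF notint_nonpos[OF assms]]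
      pochhammer_Gamma[OF notint_nonpos[OF az]]
    using Gamma_nz[OF az] Gamma_nz[OF assms] by simp
qed

lemma poch_nat_choose: "pochhammer (of_nat p :: complex) k = of_nat ((p + k - 1) choose k) * fact k"
proof (cases p)
  case 0
  then show ?thesis by (cases k) (auto simp: pochhammer_0_left binomial_eq_0)
next
  case (Suc n)
  have "of_nat ((p + k - 1) choose k) = (of_nat (p+k-1) gchoose k :: complex)"
    by (rule binomial_gbinomial)
  also have "\<dots> = pochhammer (of_nat p) k / fact k"
    unfolding gbinomial_pochhammer' using Suc by (simp add: of_nat_diff algebra_simps)
  finally show ?thesis by simp
qed

lemma poch_neg_choose: "k \<le> q \<Longrightarrow> pochhammer (- of_nat q :: complex) k = (-1)^k * fact q / fact (q - k)"
proof -
  assume kq: "k \<le> q"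
  have "(of_nat q gchoose k :: complex) = (- 1) ^ k * pochhammer (- of_nat q) k / fact k"
    by (rule gbinomial_pochhammer)
  moreover have "(of_nat q gchoose k :: complex) = of_nat (q choose k)" by (simp add: binomial_gbinomial)
  moreover have "(of_nat (q choose k) :: complex) = fact q / (fact k * fact (q - k))"
    using binomial_fact[OF kq] by simp
  ultimately have "pochhammer (- of_nat q) k = (-1)^k * fact k * (fact q / (fact k * fact (q - k)) :: complex)"
    by (simp add: field_simps)
  then show ?thesis by (simp add: field_simps)
qed



lemma poch1a_nz:
  assumes "(a::complex) \<notin> \<int>" shows "pochhammer (1-a) k \<noteq> 0"
proof
  assume "pochhammer (1-a) k = 0"
  then obtain j where "1 - a = - of_nat j" by (auto simp: pochhammer_eq_0_iff)
  then have "a = of_nat (j+1)" by (simp add: algebra_simps)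
  then show False using assms by (metis Ints_of_nat)
qed

lemma sign_split: "k \<le> q \<Longrightarrow> (-1::complex)^(q-k) = (-1)^q * (-1)^k"
proof -
  assume "k \<le> q"
  then have "(-1::complex)^q = (-1)^(q-k) * (-1)^k" by (metis le_add_diff_inverse2 power_add)
  then have "(-1)^q * (-1)^k = (-1::complex)^(q-k) * ((-1)^k * (-1)^k)" by simp
  also have "(-1::complex)^k * (-1)^k = 1" by (metis power_add power_minus1_even mult_2 [symmetric] power_mult_distrib ) 
  finally show ?thesis by simp
qed



lemma cv:
  assumes "(a::complex) \<notin> \<int>"
  shows "pochhammer (a + of_int (int p - int q)) q / (pochhammer (1-a) q * fact q)
    = (\<Sum>k\<le>q. (-1)^(q-k) * of_nat ((p+k-1) choose k) / (fact (q-k) * pochhammer (1-a) k))"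
proof -
  note nz = poch1a_nz[OF assms]
  have c: "\<forall>i\<in>{0..<q}. 1 - a \<noteq> - of_nat i" using nz pochhammer_eq_0_iff by blast
  have V: "(\<Sum>k\<in>{0..q}. pochhammer (of_nat p) k * pochhammer (- of_nat q) k / (fact k * pochhammer (1-a) k))
       = pochhammer (1 - a - of_nat p) q / pochhammer (1-a) q"
    using Vandermonde_pochhammer[OF c, of "of_nat p"] by simp
  have m: "pochhammer (1 - a - of_nat p) q = (-1)^q * pochhammer (a + of_int (int p - int q)) q"
    using pochhammer_minus[of "a + of_nat p - 1" q] by (simp add: algebra_simps)
  have "(\<Sum>k\<le>q. (-1)^(q-k) * of_nat ((p+k-1) choose k) / (fact (q-k) * pochhammer (1-a) k))
     = (\<Sum>k\<in>{0..q}. ((-1)^q / fact q) * (pochhammer (of_nat p) k * pochhammer (- of_nat q) k / (fact k * pochhammer (1-a) k)))"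
  proof (rule sum.cong)
    fix k assume "k \<in> {0..q}"
    then have kq: "k \<le> q" by simp
    have e: "pochhammer (of_nat p) k * pochhammer (- of_nat q) k / (fact k * pochhammer (1-a) k)
       = of_nat ((p+k-1) choose k) * (-1)^k * fact q / (fact (q - k) * pochhammer (1-a) k)"
      unfolding poch_nat_choose poch_neg_choose[OF kq] by simp
    have f: "(fact q :: complex) \<noteq> 0" by simp
    show "(-1)^(q-k) * of_nat ((p+k-1) choose k) / (fact (q-k) * pochhammer (1-a) k)
       = ((-1)^q / fact q) * (pochhammer (of_nat p) k * pochhammer (- of_nat q) k / (fact k * pochhammer (1-a) k))"
      unfolding e sign_split[OF kq] using f by (simp add: mult_ac)
  qed (auto simp: atLeast0AtMost)
  also have "\<dots> = ((-1)^q / fact q) * (pochhammer (1 - a - of_nat p) q / pochhammer (1-a) q)"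
    by (simp only: sum_distrib_left[symmetric] V)
  also have "\<dots> = pochhammer (a + of_int (int p - int q)) q / (pochhammer (1-a) q * fact q)"
    unfolding m by simp
  finally show ?thesis by simp
qed


lemma ifmult: "(if P then (c::complex) else 0) * x = (if P then c * x else 0)" by simp

lemma monom_mult: "fps2_mult (fps2_monom l k) g p q = (if l \<le> p \<and> k \<le> q then g (p-l) (q-k) else 0)"
proof -
  have "fps2_mult (fps2_monom l k) g p q = (\<Sum>i\<le>p. if i = l then (\<Sum>j\<le>q. if j = k then g (p-i) (q-j) else 0) else 0)"
    unfolding fps2_mult_def fps2_monom_def by (intro sum.cong refl) (auto simp: ifmult sum.delta)
  also have "\<dots> = (if l \<le> p \<and> k \<le> q then g (p-l) (q-k) else 0)"
    by (simp add: sum.delta)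
  finally show ?thesis .
qed

lemma xy_mult: "fps2_mult (in_x f) (in_y g) p q = f p * g q"
proof -
  have "fps2_mult (in_x f) (in_y g) p q = (\<Sum>i\<le>p. if i = p then (\<Sum>j\<le>q. if j = 0 then f i * g (q - j) else 0) else 0)"
    unfolding fps2_mult_def in_x_def in_y_def by (intro sum.cong refl) (auto simp: ifmult sum.delta)
  also have "\<dots> = f p * g q" by (simp add: sum.delta)
  finally show ?thesis .
qed

lemma binsum: "1 \<le> k \<Longrightarrow> (\<Sum>l\<in>{1..k}. (p choose l) * ((k-1) choose (l-1))) = (p + (k-1)) choose k"
proof -
  assume k: "1 \<le> k"
  have "(p + (k-1)) choose k = (\<Sum>i\<le>k. (p choose i) * ((k-1) choose (k-i)))"
    by (rule vandermonde[symmetric])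
  also have "{..k} = insert 0 {1..k}" by auto
  also have "(\<Sum>i\<in>insert 0 {1..k}. (p choose i) * ((k-1) choose (k-i))) = (\<Sum>i\<in>{1..k}. (p choose i) * ((k-1) choose (k-i)))"
    using k by (simp add: binomial_eq_0)
  also have "\<dots> = (\<Sum>l\<in>{1..k}. (p choose l) * ((k-1) choose (l-1)))"
  proof (rule sum.cong)
    fix i assume "i \<in> {1..k}"
    then have "(k-1) choose (i-1) = (k-1) choose ((k-1) - (i-1))" by (intro binomial_symmetric) auto
    moreover have "(k-1) - (i-1) = k - i" using \<open>i \<in> {1..k}\<close> by auto
    ultimately show "(p choose i) * ((k-1) choose (k-i)) = (p choose i) * ((k-1) choose (i-1))" by simp
  qed simp
  finally show ?thesis by simp
qed



lemma termT:
  fixes a b c d e :: complex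
  assumes a: "a \<notin> \<int>" and e: "\<forall>n::nat. e \<noteq> - of_nat n" and kl: "1 \<le> l" "l \<le> k" "k \<le> q" and lp: "l \<le> p"
  shows "(fact (k - 1) / (fact (l - 1) * fact l * fact (k - l))
          * (-1) ^ (k - l) * pochhammer b l * pochhammer c k * pochhammer d k
          / (pochhammer (1 - a) k * pochhammer (1 - a) (k - l) * pochhammer e l))
      * ((-1) ^ (q - k) * hornH2 (a - of_nat k + of_nat l) (b + of_nat l) (c + of_nat k)
                              (d + of_nat k) (e + of_nat l) (p - l) (q - k))
    = pochhammer b p * pochhammer c q * pochhammer d q / pochhammer e p * poch_int a (int p - int q)
      * (-1)^(q-k) * of_nat ((p choose l) * ((k-1) choose (l-1))) / (fact p * fact (q-k) * pochhammer (1-a) k)"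
proof -
  define m where "m = k - l"
  have h1: "a - of_nat k + of_nat l = a - of_nat m" using kl by (simp add: m_def of_nat_diff)
  have h2: "int (p - l) - int (q - k) = (int p - int q) + int m" using kl lp by (simp add: m_def)
  have P: "poch_int (a - of_nat k + of_nat l) (int (p - l) - int (q - k)) = poch_int a (int p - int q) * ((-1)^m * pochhammer (1-a) m)"
    unfolding h1 h2 by (rule poch_shift[OF a])
  have pb: "pochhammer b p = pochhammer b l * pochhammer (b + of_nat l) (p - l)" using lp by (rule pochhammer_product)
  have pc: "pochhammer c q = pochhammer c k * pochhammer (c + of_nat k) (q - k)" using kl by (intro pochhammer_product) auto
  have pd: "pochhammer d q = pochhammer d k * pochhammer (d + of_nat k) (q - k)" using kl by (intro pochhammer_product) auto
  have pe: "pochhammer e p = pochhammer e l * pochhammer (e + of_nat l) (p - l)" using lp by (rule pochhammer_product)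
  have enz: "pochhammer e n \<noteq> 0" for n using e by (auto simp: pochhammer_eq_0_iff)
  have enz2: "pochhammer (e + of_nat l) n \<noteq> 0" for n
  proof
    assume "pochhammer (e + of_nat l) n = 0"
    then obtain j where "e + of_nat l = - of_nat j" by (auto simp: pochhammer_eq_0_iff)
    then have "e = - of_nat (l + j)" by (simp add: algebra_simps)
    then show False using e by blast
  qed
  have b1: "(of_nat (p choose l) :: complex) = fact p / (fact l * fact (p - l))" using binomial_fact[OF lp] by simp
  have mk: "(k - 1) - (l - 1) = m" using kl by (simp add: m_def)
  have b2: "(of_nat ((k-1) choose (l-1)) :: complex) = fact (k-1) / (fact (l-1) * fact m)"
    using binomial_fact[of "l-1" "k-1", where 'a=complex] kl unfolding mk by simp
  have bb: "(of_nat ((p choose l) * ((k-1) choose (l-1))) :: complex) = fact p / (fact l * fact (p - l)) * (fact (k-1) / (fact (l-1) * fact m))"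
    by (simp only: of_nat_mult b1 b2)
  have ss: "((-1::complex)^m) * (-1)^m = 1" by (metis power_add power_minus1_even mult_2)
  note nz = poch1a_nz[OF a]
  show ?thesis
    unfolding hornH2_def P pb pc pd pe bb m_def[symmetric]
    using nz[of k] nz[of m] enz[of l] enz2[of "p-l"] ss
    by (simp add: field_simps)
qed



theorem mainTheorem3:
  fixes a b c d e :: complex
  assumes "a \<notin> \<int>"
    and "\<forall>n::nat. e \<noteq> - of_nat n"
  defines "T \<equiv> (\<lambda>(k, l).
      fps2_smult (fact (k - 1) / (fact (l - 1) * fact l * fact (k - l))
          * (-1) ^ (k - l) * pochhammer b l * pochhammer c k * pochhammer d k
          / (pochhammer (1 - a) k * pochhammer (1 - a) (k - l) * pochhammer e l))
        (fps2_mult (fps2_monom l k)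
          (fps2_neg_y (hornH2 (a - of_nat k + of_nat l) (b + of_nat l) (c + of_nat k)
                              (d + of_nat k) (e + of_nat l)))))"
    and "I \<equiv> {(k, l). 1 \<le> k \<and> 1 \<le> l \<and> l \<le> (k::nat)}"
  shows "fps2_summable T I \<and>
    fps2_mult (in_x (gaussF a b e)) (in_y (gaussF c d (1 - a)))
      = fps2_add (fps2_neg_y (hornH2 a b c d e)) (fps2_sum T I)"
proof -
  define K where "K p q = pochhammer b p * pochhammer c q * pochhammer d q / pochhammer e p * poch_int a (int p - int q)" for p q
  have Tval: "T (k,l) p q = K p q * (-1)^(q-k) * of_nat ((p choose l) * ((k-1) choose (l-1))) / (fact p * fact (q-k) * pochhammer (1-a) k)"
    if "1 \<le> l" "l \<le> k" "k \<le> q" for k l p q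
  proof (cases "l \<le> p")
    case True
    show ?thesis unfolding T_def K_def fps2_smult_def monom_mult fps2_neg_y_def
      using True that termT[OF assms(1,2) that True, of b c d] by simp
  next
    case False
    then show ?thesis unfolding T_def fps2_smult_def monom_mult by simp
  qed
  have Tzero: "T (k,l) p q = 0" if "q < k" for k l p q
    unfolding T_def fps2_smult_def monom_mult using that by simp
  define J where "J q = (SIGMA k:{1..q}. {1..k::nat})" for q
  have finJ: "finite (J q)" for q unfolding J_def by auto
  have JI: "J q \<subseteq> I" for q unfolding J_def I_def by auto
  have out: "x \<in> I - J q \<Longrightarrow> T x p q = 0" for x p q
    unfolding J_def I_def using Tzero by (cases x) auto
  have summ: "(\<lambda>i. T i p q) summable_on I" for p q
  proof -
    have "(\<lambda>i. T i p q) summable_on (J q)" using finJ by simp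
    then show ?thesis using summable_on_cong_neutral[of I "J q" "\<lambda>i. T i p q" "\<lambda>i. T i p q"] out JI by blast
  qed
  have isum: "(\<Sum>\<^sub>\<infinity>i\<in>I. T i p q) = (\<Sum>k\<in>{1..q}. \<Sum>l\<in>{1..k}. T (k,l) p q)" for p q
  proof -
    have "(\<Sum>\<^sub>\<infinity>i\<in>I. T i p q) = (\<Sum>\<^sub>\<infinity>i\<in>J q. T i p q)"
      using infsum_cong_neutral[of "J q" I "\<lambda>i. T i p q" "\<lambda>i. T i p q"] out JI by blast
    also have "\<dots> = (\<Sum>i\<in>J q. T i p q)" using finJ by simp
    also have "\<dots> = (\<Sum>k\<in>{1..q}. \<Sum>l\<in>{1..k}. T (k,l) p q)" unfolding J_def
      by (simp add: sum.Sigma)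
    finally show ?thesis .
  qed
  define tm where "tm p q k = (-1)^(q-k) * of_nat ((p+k-1) choose k) / (fact (q-k) * pochhammer (1-a) k)" for p q k
  have main: "gaussF a b e p * gaussF c d (1-a) q = (-1)^q * hornH2 a b c d e p q + (\<Sum>k\<in>{1..q}. \<Sum>l\<in>{1..k}. T (k,l) p q)" for p q
  proof -
    have fnz: "(fact p :: complex) \<noteq> 0" by simp
    have s1: "(\<Sum>l\<in>{1..k}. T (k,l) p q) = K p q / fact p * tm p q k" if "k \<in> {1..q}" for k
    proof -
      have "(\<Sum>l\<in>{1..k}. T (k,l) p q) = (\<Sum>l\<in>{1..k}. (K p q * (-1)^(q-k) / (fact p * fact (q-k) * pochhammer (1-a) k)) * of_nat ((p choose l) * ((k-1) choose (l-1))))"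
        using that by (intro sum.cong refl) (simp add: Tval)
      also have "\<dots> = (K p q * (-1)^(q-k) / (fact p * fact (q-k) * pochhammer (1-a) k)) * of_nat (\<Sum>l\<in>{1..k}. (p choose l) * ((k-1) choose (l-1)))"
        by (simp only: sum_distrib_left of_nat_sum)
      also have "(\<Sum>l\<in>{1..k}. (p choose l) * ((k-1) choose (l-1))) = (p+k-1) choose k"
        using binsum[of k p] that by simp
      finally show ?thesis unfolding tm_def by (simp add: mult_ac)
    qed
    have s0: "(-1)^q * hornH2 a b c d e p q = K p q / fact p * tm p q 0"
      unfolding hornH2_def K_def tm_def by simp
    have "(-1)^q * hornH2 a b c d e p q + (\<Sum>k\<in>{1..q}. \<Sum>l\<in>{1..k}. T (k,l) p q)
        = K p q / fact p * (\<Sum>k\<in>insert 0 {1..q}. tm p q k)"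
    proof -
      have "(\<Sum>k\<in>{1..q}. \<Sum>l\<in>{1..k}. T (k,l) p q) = (\<Sum>k\<in>{1..q}. K p q / fact p * tm p q k)"
        by (rule sum.cong) (simp_all only: s1)
      also have "\<dots> = K p q / fact p * (\<Sum>k\<in>{1..q}. tm p q k)" by (simp only: sum_distrib_left)
      finally show ?thesis unfolding s0 by (simp add: distrib_left)
    qed
    also have "insert 0 {1..q} = {..q}" by auto
    also have "(\<Sum>k\<le>q. tm p q k) = pochhammer (a + of_int (int p - int q)) q / (pochhammer (1-a) q * fact q)"
      unfolding tm_def using cv[OF assms(1)] by simp
    finally have R: "(-1)^q * hornH2 a b c d e p q + (\<Sum>k\<in>{1..q}. \<Sum>l\<in>{1..k}. T (k,l) p q)
        = K p q / fact p * (pochhammer (a + of_int (int p - int q)) q / (pochhammer (1-a) q * fact q))" .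
    have L: "gaussF a b e p * gaussF c d (1-a) q = K p q / fact p * (pochhammer (a + of_int (int p - int q)) q / (pochhammer (1-a) q * fact q))"
      unfolding gaussF_def K_def poch_split[OF assms(1), of p q] by simp
    show ?thesis using L R by simp
  qed
  show ?thesis
  proof
    show "fps2_summable T I" unfolding fps2_summable_def using summ by blast
    show "fps2_mult (in_x (gaussF a b e)) (in_y (gaussF c d (1 - a))) = fps2_add (fps2_neg_y (hornH2 a b c d e)) (fps2_sum T I)"
      unfolding fps2_add_def fps2_neg_y_def fps2_sum_def xy_mult isum main by (intro ext) simp
  qed
qed

end
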